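(* For $n\ge 2$, let $\mathscr{V}_n=\langle Q,\{a,b\},\delta\rangle$ with $Q=\{0,1,\dots,n-1\}$, where $\delta(i,b)=i+1$ for $0\le i\le n-2$ and $\delta(n-1,b)=0$; $\delta(i,a)=i+1$ for $0\le i\le n-3$, $\delta(n-2,a)=0$ and $\delta(n-1,a)=0$. Then $sc(Syn(\mathscr{V}_n))=2^n-n$.
   Context: For a DFA $\mathscr{A}=\langle Q,\Sigma,\delta\rangle$ (total transition function, extended to words), $Syn(\mathscr{A})$ is the set of words $w\in\Sigma^*$ such that $\delta(q,w)=\delta(q',w)$ for all $q,q'\in Q$. The state complexity $sc(L)$ of a regular language $L$ is the number of states of the minimal (complete) DFA recognizing $L$. *)

theory Defs
  imports Main
begin

datatype letter = La | Lb

definition Syn :: "'q set \<Rightarrow> ('q \<Rightarrow> 'a \<Rightarrow> 'q) \<Rightarrow> 'a list set" where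
  "Syn Q d = {w. \<forall>q\<in>Q. \<forall>q'\<in>Q. foldl d q w = foldl d q' w}"

definition dfa_recognizes :: "'a list set \<Rightarrow> nat set \<Rightarrow> (nat \<Rightarrow> 'a \<Rightarrow> nat) \<Rightarrow> nat \<Rightarrow> nat set \<Rightarrow> bool" where
  "dfa_recognizes L Q d q0 F \<longleftrightarrow>
     finite Q \<and> q0 \<in> Q \<and> F \<subseteq> Q \<and> (\<forall>q\<in>Q. \<forall>x. d q x \<in> Q) \<and>
     L = {w. foldl d q0 w \<in> F}"

definition sc :: "'a list set \<Rightarrow> nat" where
  "sc L = (LEAST m. \<exists>Q d q0 F. dfa_recognizes L Q d q0 F \<and> card Q = m)"

fun deltaV :: "nat \<Rightarrow> nat \<Rightarrow> letter \<Rightarrow> nat" where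
  "deltaV n i Lb = (if i + 1 < n then i + 1 else 0)"
| "deltaV n i La = (if i + 2 < n then i + 1 else 0)"

end

theory Submission
  imports Defs "HOL-Library.Nat_Bijection"
begin

definition img :: "nat \<Rightarrow> letter list \<Rightarrow> nat set \<Rightarrow> nat set" where
  "img n w X = (\<lambda>q. foldl (deltaV n) q w) ` X"

lemma dV_lt: "0 < n \<Longrightarrow> deltaV n q x < n"
  by (cases x) auto

lemma foldl_lt: "0 < n \<Longrightarrow> q < n \<Longrightarrow> foldl (deltaV n) q w < n"
  by (induction w arbitrary: q) (auto simp: dV_lt)

lemma img_append: "img n (u @ v) X = img n v (img n u X)"
  by (auto simp: img_def image_image)

lemma img_Nil[simp]: "img n [] X = X"
  by (simp add: img_def)

lemma img_subset: "0 < n \<Longrightarrow> X \<subseteq> {0..<n} \<Longrightarrow> img n w X \<subseteq> {0..<n}"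
proof
  fix y assume a: "0 < n" "X \<subseteq> {0..<n}" and "y \<in> img n w X"
  then obtain q where "q \<in> X" "y = foldl (deltaV n) q w" by (auto simp: img_def)
  then show "y \<in> {0..<n}" using a foldl_lt[of n q w] by auto
qed

lemma foldl_b: "q < n \<Longrightarrow> foldl (deltaV n) q (replicate m Lb) = (q + m) mod n"
proof (induction m arbitrary: q)
  case 0 then show ?case by simp
next
  case (Suc m)
  have E: "deltaV n q Lb = (q + 1) mod n"
  proof (cases "q + 1 < n")
    case True then show ?thesis by simp
  next
    case False then have "q + 1 = n" using Suc.prems by linarith
    then show ?thesis by simp
  qed
  have L: "deltaV n q Lb < n" using Suc.prems by (simp add: dV_lt)
  have "foldl (deltaV n) q (replicate (Suc m) Lb) = foldl (deltaV n) (deltaV n q Lb) (replicate m Lb)"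
    by (simp only: replicate_Suc foldl_Cons)
  also have "\<dots> = (deltaV n q Lb + m) mod n" by (rule Suc.IH[OF L])
  also have "\<dots> = ((q + 1) mod n + m) mod n" by (simp only: E)
  also have "\<dots> = (q + Suc m) mod n" by (simp add: mod_add_left_eq)
  finally show ?case .
qed

lemma foldl_a: "2 \<le> n \<Longrightarrow> q \<le> n - 2 \<Longrightarrow> foldl (deltaV n) q (replicate m La) = (q + m) mod (n - 1)"
proof (induction m arbitrary: q)
  case 0 then show ?case by simp
next
  case (Suc m)
  have e: "deltaV n q La = (q + 1) mod (n - 1)"
  proof (cases "q + 2 < n")
    case True then show ?thesis by simp
  next
    case False then have "q + 1 = n - 1" using Suc.prems by linarith
    then show ?thesis using False by simp
  qed
  have "(q + 1) mod (n - 1) < n - 1" using Suc.prems by simp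
  then have L: "deltaV n q La \<le> n - 2" using e by linarith
  have "foldl (deltaV n) q (replicate (Suc m) La) = foldl (deltaV n) (deltaV n q La) (replicate m La)"
    by (simp only: replicate_Suc foldl_Cons)
  also have "\<dots> = (deltaV n q La + m) mod (n - 1)" by (rule Suc.IH[OF Suc.prems(1) L])
  also have "\<dots> = ((q + 1) mod (n - 1) + m) mod (n - 1)" by (simp only: e)
  also have "\<dots> = (q + Suc m) mod (n - 1)" by (simp add: mod_add_left_eq)
  finally show ?case .
qed

definition cw :: "nat \<Rightarrow> letter list" where "cw n = replicate (n - 1) La"

lemma c_eff: "2 \<le> n \<Longrightarrow> q < n \<Longrightarrow> foldl (deltaV n) q (cw n) = (if q = n - 1 then n - 2 else q)"
proof (cases "q = n - 1")
  case True
  assume n: "2 \<le> n"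
  have r: "replicate (n - 1) La = La # replicate (n - 2) La"
  proof -
    have "n - 1 = Suc (n - 2)" using n by linarith
    then show ?thesis by simp
  qed
  have "deltaV n q La = 0" using True n by auto
  then show ?thesis using True n r foldl_a[of n 0 "n - 2"] by (simp add: cw_def)
next
  case False
  assume n: "2 \<le> n" "q < n"
  then have "q \<le> n - 2" using False by linarith
  have "q < n - 1" using \<open>q \<le> n - 2\<close> n by linarith
  have "(q + (n - 1)) mod (n - 1) = q mod (n - 1)" by (rule mod_add_self2)
  also have "\<dots> = q" using \<open>q < n - 1\<close> by (rule mod_less)
  finally have "(q + (n - 1)) mod (n - 1) = q" .
  then show ?thesis using False n foldl_a[of n q "n - 1"] \<open>q \<le> n - 2\<close> by (simp add: cw_def)
qed

lemma cb_eff: "2 \<le> n \<Longrightarrow> q < n \<Longrightarrow> foldl (deltaV n) q (cw n @ [Lb]) = min (q + 1) (n - 1)"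
  using c_eff[of n q] by auto

lemma sweep: "2 \<le> n \<Longrightarrow> q < n \<Longrightarrow>
  foldl (deltaV n) q (concat (replicate m (cw n @ [Lb]))) = min (q + m) (n - 1)"
proof (induction m arbitrary: q)
  case 0 then show ?case by simp
next
  case (Suc m)
  have "foldl (deltaV n) q (concat (replicate (Suc m) (cw n @ [Lb])))
     = foldl (deltaV n) (min (q + 1) (n - 1)) (concat (replicate m (cw n @ [Lb])))"
    unfolding replicate_Suc concat.simps
      foldl_append[of "deltaV n" q "cw n @ [Lb]" "concat (replicate m (cw n @ [Lb]))"]
      cb_eff[OF Suc.prems] by (rule refl)
  also have "\<dots> = min (min (q + 1) (n - 1) + m) (n - 1)"
    by (rule Suc.IH) (use Suc.prems in auto)
  also have "\<dots> = min (q + Suc m) (n - 1)" by linarith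
  finally show ?case .
qed

definition dw :: "nat \<Rightarrow> nat \<Rightarrow> letter list" where
  "dw n q = replicate ((n - q) mod n) Lb @ concat (replicate (n - 2) (cw n @ [Lb]))"

lemma rot0A: "q \<le> x \<Longrightarrow> x < n \<Longrightarrow> (x + (n - q) mod n) mod n = x - (q::nat)"
proof -
  assume True: "q \<le> x" and a: "x < n"
  have e: "(x + (n - q) mod n) mod n = (x + (n - q)) mod n" by (metis mod_add_right_eq)
  have "x + (n - q) = (x - q) + n" using a True by simp
  then have "(x + (n - q)) mod n = (x - q) mod n" by (simp only: mod_add_self2)
  also have "\<dots> = x - q" using a by simp
  finally show ?thesis using e by simp
qed

lemma rot0B: "\<not> q \<le> x \<Longrightarrow> q < n \<Longrightarrow> (x + (n - q) mod n) mod n = x + (n - (q::nat))"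
proof -
  assume F: "\<not> q \<le> x" and a: "q < n"
  have e: "(x + (n - q) mod n) mod n = (x + (n - q)) mod n" by (metis mod_add_right_eq)
  have "x + (n - q) < n" using F a by linarith
  then have "(x + (n - q)) mod n = x + (n - q)" by (simp only: mod_less)
  then show ?thesis using e by simp
qed

lemma rot0: "(x::nat) < n \<Longrightarrow> q < n \<Longrightarrow> (x + (n - q) mod n) mod n = 0 \<longleftrightarrow> x = q"
proof (cases "q \<le> x")
  case True
  assume a: "x < n"
  show ?thesis unfolding rot0A[OF True a] using True by arith
next
  case False
  assume a: "q < n"
  show ?thesis unfolding rot0B[OF False a] using False a by arith
qed

lemma min_aux: "(y::nat) < n \<Longrightarrow> 2 \<le> n \<Longrightarrow> min (y + (n - 2)) (n - 1) = (if y = 0 then n - 2 else n - 1)"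
  by auto

lemma dw_eff: "2 \<le> n \<Longrightarrow> x < n \<Longrightarrow> q < n \<Longrightarrow>
  foldl (deltaV n) x (dw n q) = (if x = q then n - 2 else n - 1)"
proof -
  assume a: "2 \<le> n" "x < n" "q < n"
  let ?x = "(x + (n - q) mod n) mod n"
  have "?x < n" using a by simp
  have "foldl (deltaV n) x (dw n q) = foldl (deltaV n) (foldl (deltaV n) x (replicate ((n - q) mod n) Lb)) (concat (replicate (n - 2) (cw n @ [Lb])))"
    by (simp only: dw_def foldl_append)
  also have "\<dots> = foldl (deltaV n) ?x (concat (replicate (n - 2) (cw n @ [Lb])))"
    by (simp only: foldl_b[OF a(2)])
  also have "\<dots> = min (?x + (n - 2)) (n - 1)" by (rule sweep) (use a in auto)
  also have "\<dots> = (if ?x = 0 then n - 2 else n - 1)"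
    by (rule min_aux) (use a in auto)
  finally have F: "foldl (deltaV n) x (dw n q) = (if ?x = 0 then n - 2 else n - 1)" .
  have R: "?x = 0 \<longleftrightarrow> x = q" by (rule rot0[OF a(2,3)])
  show ?thesis
  proof (cases "x = q")
    case True
    have "?x = 0" using R True by (rule iffD2)
    then show ?thesis using F True by (simp only: if_True simp_thms)
  next
    case False
    have "?x \<noteq> 0"
    proof
      assume "?x = 0"
      then have "x = q" by (rule iffD1[OF R])
      with False show False by (rule notE)
    qed
    then show ?thesis using F False by (simp only: if_False)
  qed
qed

lemma closed_all:
  fixes n t0 :: nat
  assumes n: "0 < n" and t0: "t0 \<in> T" and T: "T \<subseteq> {0..<n}"
    and cl: "\<forall>i\<in>T. (i + 1) mod n \<in> T"
  shows "T = {0..<n}"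
proof -
  have t0n: "t0 < n" using t0 T by auto
  have all: "(t0 + m) mod n \<in> T" for m
  proof (induction m)
    case 0 then show ?case using t0 t0n by simp
  next
    case (Suc m)
    have "((t0 + m) mod n + 1) mod n \<in> T" using cl Suc.IH by blast
    moreover have "((t0 + m) mod n + 1) mod n = (t0 + Suc m) mod n" by (simp add: mod_Suc_eq)
    ultimately show ?case by simp
  qed
  show ?thesis
  proof
    show "T \<subseteq> {0..<n}" by (rule T)
  next
    show "{0..<n} \<subseteq> T"
    proof
      fix x assume "x \<in> {0..<n}"
      then have x: "x < n" by simp
      have "t0 + (x + n - t0) = x + n" using t0n by simp
      then have "(t0 + (x + n - t0)) mod n = x" using x by simp
      then show "x \<in> T" using all[of "x + n - t0"] by simp
    qed
  qed
qed

lemma rot_back: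
  fixes n s y :: nat
  assumes "s \<le> n" "y < n"
  shows "((y + s) mod n + (n - s)) mod n = y"
proof -
  have "((y + s) mod n + (n - s)) mod n = (y + s + (n - s)) mod n" by (simp add: mod_add_left_eq)
  also have "y + s + (n - s) = y + n" using assms by simp
  finally show ?thesis using assms by simp
qed

lemma reach:
  fixes n :: nat
  assumes n: "2 \<le> n"
  shows "T \<subseteq> {0..<n} \<Longrightarrow> T \<noteq> {} \<Longrightarrow> \<exists>u. img n u {0..<n} = T"
proof (induction "n - card T" arbitrary: T rule: less_induct)
  case less
  show ?case
  proof (cases "T = {0..<n}")
    case True then show ?thesis by (intro exI[of _ "[]"]) simp
  next
    case False
    obtain t0 where t0: "t0 \<in> T" using less.prems by blast
    have "\<not> (\<forall>i\<in>T. (i + 1) mod n \<in> T)"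
      using closed_all[of n t0 T] n t0 less.prems False by auto
    then obtain i where i: "i \<in> T" "(i + 1) mod n \<notin> T" by blast
    have iN: "i < n" using i less.prems by auto
    define s where "s = (i + 2) mod n"
    have sn: "s < n" using n by (simp add: s_def)
    define T' where "T' = {y \<in> {0..<n}. (y + s) mod n \<in> T}"
    have inj: "inj_on (\<lambda>y. (y + s) mod n) {0..<n}"
    proof (rule inj_onI)
      fix y z assume "y \<in> {0..<n}" "z \<in> {0..<n}" "(y + s) mod n = (z + s) mod n"
      then show "y = z" using rot_back[of s n y] rot_back[of s n z] sn by auto
    qed
    have imgT': "(\<lambda>y. (y + s) mod n) ` T' = T"
    proof
      show "(\<lambda>y. (y + s) mod n) ` T' \<subseteq> T" by (auto simp: T'_def)
    next
      show "T \<subseteq> (\<lambda>y. (y + s) mod n) ` T'"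
      proof
        fix t assume t: "t \<in> T"
        then have tn: "t < n" using less.prems by auto
        let ?y = "(t + (n - s)) mod n"
        have "(?y + s) mod n = (t + (n - s) + s) mod n" by (simp add: mod_add_left_eq)
        also have "t + (n - s) + s = t + n" using sn by simp
        finally have "(?y + s) mod n = t" using tn by simp
        moreover have "?y < n" using n by simp
        ultimately show "t \<in> (\<lambda>y. (y + s) mod n) ` T'" using t
          by (auto simp: T'_def intro!: image_eqI[of _ _ ?y])
      qed
    qed
    have T'sub: "T' \<subseteq> {0..<n}" by (auto simp: T'_def)
    have cardT': "card T' = card T"
      using card_image[OF inj_on_subset[OF inj T'sub]] imgT' by simp
    have "(n - 2 + s) mod n = (n - 2 + (i + 2)) mod n" by (simp add: s_def mod_add_right_eq)
    also have "n - 2 + (i + 2) = i + n" using n by simp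
    finally have "(n - 2 + s) mod n = i" using iN by simp
    then have n2: "n - 2 \<in> T'" using i n by (auto simp: T'_def)
    have "(n - 1 + s) mod n = (n - 1 + (i + 2)) mod n" by (simp add: s_def mod_add_right_eq)
    also have "n - 1 + (i + 2) = (i + 1) + n" using n by simp
    finally have "(n - 1 + s) mod n = ((i + 1) + n) mod n" .
    then have "(n - 1 + s) mod n = (i + 1) mod n" by (simp only: mod_add_self2)
    then have n1: "n - 1 \<notin> T'" using i by (auto simp: T'_def)
    define S where "S = insert (n - 1) T'"
    have Ssub: "S \<subseteq> {0..<n}" using T'sub n by (auto simp: S_def)
    have fin: "finite T'" using T'sub finite_subset by blast
    have cardS: "card S = card T + 1" using n1 fin cardT' by (simp add: S_def)
    have "card T < n"
      using psubset_card_mono[of "{0..<n}" T] less.prems False by auto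
    then have "n - card S < n - card T" using cardS by simp
    then obtain u where u: "img n u {0..<n} = S"
      using less.hyps[of S] Ssub by (auto simp: S_def)
    have cS: "img n (cw n) S = T'"
    proof -
      have "img n (cw n) S = (\<lambda>q. if q = n - 1 then n - 2 else q) ` S"
        unfolding img_def using c_eff[OF n] Ssub by (intro image_cong) auto
      also have "\<dots> = insert (n - 2) T'"
        using n1 by (auto simp: S_def)
      also have "\<dots> = T'" using n2 by auto
      finally show ?thesis .
    qed
    have bT: "img n (replicate s Lb) T' = T"
    proof -
      have "img n (replicate s Lb) T' = (\<lambda>y. (y + s) mod n) ` T'"
        unfolding img_def using foldl_b T'sub by (intro image_cong) auto
      then show ?thesis using imgT' by simp
    qed
    have "img n (u @ cw n @ replicate s Lb) {0..<n} = T"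
      by (simp only: img_append u cS bT)
    then show ?thesis by blast
  qed
qed


definition subsing :: "nat set \<Rightarrow> bool" where
  "subsing X \<longleftrightarrow> (\<forall>x\<in>X. \<forall>y\<in>X. x = y)"

lemma subsing_card: "finite X \<Longrightarrow> subsing X \<longleftrightarrow> card X < 2"
  using card_le_Suc0_iff_eq[of X] by (auto simp: subsing_def)

lemma Syn_img: "w \<in> Syn {0..<n} (deltaV n) \<longleftrightarrow> subsing (img n w {0..<n})"
  by (auto simp: Syn_def img_def subsing_def)

definition Aset :: "nat \<Rightarrow> nat set set" where
  "Aset n = {T. T \<subseteq> {0..<n} \<and> 2 \<le> card T}"

lemma finite_Aset: "finite (Aset n)"
proof -
  have "Aset n \<subseteq> Pow {0..<n}" by (auto simp: Aset_def)
  then show ?thesis by (rule finite_subset) simp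
qed

lemma card_Aset: "card (Aset n) + n + 1 = 2 ^ n"
proof -
  let ?B = "(\<lambda>i. {i}) ` {0..<n}"
  have P: "Pow {0..<n} = Aset n \<union> ?B \<union> {{}}"
  proof
    show "Pow {0..<n} \<subseteq> Aset n \<union> ?B \<union> {{}}"
    proof
      fix X assume X: "X \<in> Pow {0..<n}"
      then have fX: "finite X" using finite_subset by auto
      show "X \<in> Aset n \<union> ?B \<union> {{}}"
      proof (cases "card X")
        case 0 then show ?thesis using fX by simp
      next
        case (Suc k)
        show ?thesis
        proof (cases k)
          case 0
          then have "card X = Suc 0" using Suc by simp
          then obtain x where "X = {x}" using card_1_singleton_iff[of X] by blast
          then show ?thesis using X by auto
        next
          case (Suc j)
          then have "2 \<le> card X" using \<open>card X = Suc k\<close> by simp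
          then show ?thesis using X by (auto simp: Aset_def)
        qed
      qed
    qed
  next
    show "Aset n \<union> ?B \<union> {{}} \<subseteq> Pow {0..<n}" by (auto simp: Aset_def)
  qed
  have d1: "Aset n \<inter> ?B = {}" by (auto simp: Aset_def)
  have d2: "(Aset n \<union> ?B) \<inter> {{}} = {}" by (auto simp: Aset_def)
  have cB: "card ?B = n" by (subst card_image) (auto simp: inj_on_def)
  have "card (Pow {0..<n}) = card (Aset n \<union> ?B) + 1"
    unfolding P using d2 finite_Aset by (subst card_Un_disjoint) auto
  also have "card (Aset n \<union> ?B) = card (Aset n) + n"
    using d1 finite_Aset cB by (subst card_Un_disjoint) auto
  finally show ?thesis by (simp add: card_Pow)
qed

lemma Aset_not_subsing: "X \<in> Aset n \<Longrightarrow> \<not> subsing X"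
proof -
  assume X: "X \<in> Aset n"
  then have "finite X" "2 \<le> card X" using finite_subset by (auto simp: Aset_def)
  then show ?thesis using subsing_card by auto
qed

lemma sep:
  assumes n: "2 \<le> n" and X: "X \<in> Aset n" and Y: "Y \<in> Aset n" and q: "q \<in> X" "q \<notin> Y"
  shows "\<not> subsing (img n (dw n q) X) \<and> subsing (img n (dw n q) Y)"
proof
  have qn: "q < n" using q X by (auto simp: Aset_def)
  have fX: "finite X" using X finite_subset by (auto simp: Aset_def)
  have "\<not> X \<subseteq> {q}"
  proof
    assume "X \<subseteq> {q}"
    then have "card X \<le> 1" using card_mono[of "{q}" X] by simp
    then show False using X by (simp add: Aset_def)
  qed
  then obtain x where x: "x \<in> X" "x \<noteq> q" by auto
  have xn: "x < n" using x X by (auto simp: Aset_def)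
  have "n - 2 \<in> img n (dw n q) X" unfolding img_def
    using dw_eff[OF n qn qn] q by (auto intro!: image_eqI[of _ _ q])
  moreover have "n - 1 \<in> img n (dw n q) X" unfolding img_def
    using dw_eff[OF n xn qn] x by (auto intro!: image_eqI[of _ _ x])
  moreover have "n - 2 \<noteq> n - 1" using n by simp
  ultimately show "\<not> subsing (img n (dw n q) X)" unfolding subsing_def by blast
next
  have qn: "q < n" using q X by (auto simp: Aset_def)
  have "\<forall>y\<in>Y. foldl (deltaV n) y (dw n q) = n - 1"
  proof
    fix y assume y: "y \<in> Y"
    then have "y < n" "y \<noteq> q" using Y q by (auto simp: Aset_def)
    then show "foldl (deltaV n) y (dw n q) = n - 1" using dw_eff[OF n _ qn] by simp
  qed
  then show "subsing (img n (dw n q) Y)" by (auto simp: subsing_def img_def)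
qed

definition Iset :: "nat \<Rightarrow> nat set set" where "Iset n = insert {0} (Aset n)"

lemma dist:
  assumes n: "2 \<le> n" and T1: "T1 \<in> Iset n" and T2: "T2 \<in> Iset n" and ne: "T1 \<noteq> T2"
  shows "\<exists>w. subsing (img n w T1) \<noteq> subsing (img n w T2)"
proof (cases "T1 = {0}")
  case True
  then have "T2 \<in> Aset n" using T2 ne by (auto simp: Iset_def)
  then show ?thesis using True Aset_not_subsing by (intro exI[of _ "[]"]) (auto simp: subsing_def)
next
  case F1: False
  then have A1: "T1 \<in> Aset n" using T1 by (auto simp: Iset_def)
  show ?thesis
  proof (cases "T2 = {0}")
    case True
    then show ?thesis using A1 Aset_not_subsing by (intro exI[of _ "[]"]) (auto simp: subsing_def)
  next
    case False
    then have A2: "T2 \<in> Aset n" using T2 by (auto simp: Iset_def)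
    show ?thesis
    proof (cases "\<exists>q. q \<in> T1 \<and> q \<notin> T2")
      case True
      then obtain q where "q \<in> T1" "q \<notin> T2" by blast
      then show ?thesis using sep[OF n A1 A2] by blast
    next
      case False
      then obtain q where "q \<in> T2" "q \<notin> T1" using ne by blast
      then show ?thesis using sep[OF n A2 A1] by metis
    qed
  qed
qed


definition dU :: "nat \<Rightarrow> nat \<Rightarrow> letter \<Rightarrow> nat" where
  "dU n c x = (let T = (\<lambda>q. deltaV n q x) ` set_decode c in if 2 \<le> card T then set_encode T else 0)"

definition Jset :: "nat \<Rightarrow> nat set set" where "Jset n = insert {} (Aset n)"

definition trunc :: "nat set \<Rightarrow> nat set" where
  "trunc X = (if 2 \<le> card X then X else {})"

lemma Jset_finite: "S \<in> Jset n \<Longrightarrow> finite S"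
  by (auto simp: Jset_def Aset_def intro: finite_subset)

lemma Jset_sub: "S \<in> Jset n \<Longrightarrow> S \<subseteq> {0..<n}"
  by (auto simp: Jset_def Aset_def)

lemma trunc_J: "0 < n \<Longrightarrow> S \<in> Jset n \<Longrightarrow> trunc (img n w S) \<in> Jset n"
  using img_subset[OF _ Jset_sub] by (auto simp: trunc_def Jset_def Aset_def)

lemma dU_enc: "S \<in> Jset n \<Longrightarrow> dU n (set_encode S) x = set_encode (trunc (img n [x] S))"
proof -
  assume S: "S \<in> Jset n"
  have "set_decode (set_encode S) = S" using Jset_finite[OF S] by simp
  moreover have "img n [x] S = (\<lambda>q. deltaV n q x) ` S" by (simp add: img_def)
  ultimately show ?thesis by (simp add: dU_def trunc_def Let_def)
qed

lemma dU_foldl: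
  assumes n: "2 \<le> n"
  shows "S \<in> Jset n \<Longrightarrow> foldl (dU n) (set_encode S) w = set_encode (trunc (img n w S))"
proof (induction w arbitrary: S)
  case Nil
  then show ?case
    by (auto simp: trunc_def Jset_def Aset_def)
next
  case (Cons x w)
  let ?S1 = "trunc (img n [x] S)"
  have J1: "?S1 \<in> Jset n" using trunc_J[OF _ Cons.prems] n by simp
  have "foldl (dU n) (set_encode S) (x # w) = foldl (dU n) (set_encode ?S1) w"
    using dU_enc[OF Cons.prems] by simp
  also have "\<dots> = set_encode (trunc (img n w ?S1))" by (rule Cons.IH[OF J1])
  also have "trunc (img n w ?S1) = trunc (img n (x # w) S)"
  proof (cases "2 \<le> card (img n [x] S)")
    case True
    then show ?thesis using img_append[of n "[x]" w S] by (simp add: trunc_def)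
  next
    case False
    have fin: "finite (img n [x] S)" using Jset_finite[OF Cons.prems] by (simp add: img_def)
    have "card (img n w (img n [x] S)) \<le> card (img n [x] S)"
      unfolding img_def[of n w] by (rule card_image_le[OF fin])
    then have "\<not> 2 \<le> card (img n (x # w) S)"
      using False img_append[of n "[x]" w S] by simp
    then show ?thesis using False by (simp add: trunc_def img_def)
  qed
  finally show ?case .
qed

lemma upper:
  assumes n: "2 \<le> n"
  shows "dfa_recognizes (Syn {0..<n} (deltaV n)) (set_encode ` Jset n) (dU n) (set_encode {0..<n}) {0}
         \<and> card (set_encode ` Jset n) = 2 ^ n - n"
proof -
  have QJ: "{0..<n} \<in> Jset n" using n by (simp add: Jset_def Aset_def)
  have inj: "inj_on set_encode (Jset n)"
    by (rule inj_on_subset[OF inj_on_set_encode]) (auto dest: Jset_finite)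
  have fJ: "finite (Jset n)" using finite_Aset by (simp add: Jset_def)
  have "{} \<notin> Aset n" by (simp add: Aset_def)
  then have cJ: "card (Jset n) = card (Aset n) + 1" using finite_Aset by (simp add: Jset_def)
  have card: "card (set_encode ` Jset n) = 2 ^ n - n"
    using card_image[OF inj] cJ card_Aset[of n] by simp
  have clos: "\<forall>q\<in>set_encode ` Jset n. \<forall>x. dU n q x \<in> set_encode ` Jset n"
  proof (intro ballI allI)
    fix q x assume "q \<in> set_encode ` Jset n"
    then obtain S where S: "S \<in> Jset n" "q = set_encode S" by blast
    then show "dU n q x \<in> set_encode ` Jset n"
      using dU_enc[OF S(1)] trunc_J[OF _ S(1)] n by auto
  qed
  have F: "{0} \<subseteq> set_encode ` Jset n" by (auto simp: Jset_def intro!: image_eqI[of _ _ "{}"])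
  have lang: "Syn {0..<n} (deltaV n) = {w. foldl (dU n) (set_encode {0..<n}) w \<in> {0}}"
  proof (intro set_eqI)
    fix w
    have ne: "img n w {0..<n} \<noteq> {}" using n by (auto simp: img_def)
    have fin: "finite (img n w {0..<n})" by (simp add: img_def)
    have "foldl (dU n) (set_encode {0..<n}) w \<in> {0} \<longleftrightarrow> trunc (img n w {0..<n}) = {}"
      using dU_foldl[OF n QJ, of w] set_encode_eq[of "trunc (img n w {0..<n})" "{}"] fin
      by (simp add: trunc_def)
    also have "\<dots> \<longleftrightarrow> subsing (img n w {0..<n})"
      using ne fin subsing_card by (auto simp: trunc_def)
    finally show "w \<in> Syn {0..<n} (deltaV n) \<longleftrightarrow> w \<in> {w. foldl (dU n) (set_encode {0..<n}) w \<in> {0}}"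
      using Syn_img by simp
  qed
  show ?thesis unfolding dfa_recognizes_def
    using fJ QJ clos F lang card by auto
qed

lemma foldl_closed: "q \<in> Q \<Longrightarrow> \<forall>q\<in>Q. \<forall>x. d q x \<in> Q \<Longrightarrow> foldl d q w \<in> Q"
  by (induction w arbitrary: q) auto

lemma lower:
  assumes n: "2 \<le> n"
    and D: "dfa_recognizes (Syn {0..<n} (deltaV n)) Q d q0 F"
  shows "2 ^ n - n \<le> card Q"
proof -
  from D have fQ: "finite Q" and q0: "q0 \<in> Q" and cl: "\<forall>q\<in>Q. \<forall>x. d q x \<in> Q"
    and L: "Syn {0..<n} (deltaV n) = {w. foldl d q0 w \<in> F}"
    by (auto simp: dfa_recognizes_def)
  define r where "r T = (SOME u. img n u {0..<n} = T)" for T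
  have rT: "img n (r T) {0..<n} = T" if "T \<in> Iset n" for T
  proof -
    have "T \<subseteq> {0..<n}" "T \<noteq> {}" using that n
      by (auto simp: Iset_def Aset_def)
    then have "\<exists>u. img n u {0..<n} = T" using reach[OF n] by blast
    then show ?thesis unfolding r_def by (rule someI_ex)
  qed
  define f where "f T = foldl d q0 (r T)" for T
  have key: "foldl d (f T) w \<in> F \<longleftrightarrow> subsing (img n w T)" if "T \<in> Iset n" for T w
  proof -
    have "foldl d (f T) w = foldl d q0 (r T @ w)" by (simp add: f_def)
    then have "foldl d (f T) w \<in> F \<longleftrightarrow> r T @ w \<in> Syn {0..<n} (deltaV n)" using L by simp
    also have "\<dots> \<longleftrightarrow> subsing (img n w T)" using Syn_img img_append rT[OF that] by simp
    finally show ?thesis .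
  qed
  have inj: "inj_on f (Iset n)"
  proof (rule inj_onI)
    fix T1 T2 assume T: "T1 \<in> Iset n" "T2 \<in> Iset n" "f T1 = f T2"
    show "T1 = T2"
    proof (rule ccontr)
      assume "T1 \<noteq> T2"
      then obtain w where "subsing (img n w T1) \<noteq> subsing (img n w T2)"
        using dist[OF n T(1,2)] by blast
      then show False using key[OF T(1), of w] key[OF T(2), of w] T(3) by simp
    qed
  qed
  have sub: "f ` Iset n \<subseteq> Q" using foldl_closed[OF q0 cl] by (auto simp: f_def)
  have "card (Iset n) \<le> card Q" by (rule card_inj_on_le[OF inj sub fQ])
  moreover have "{0} \<notin> Aset n" by (simp add: Aset_def)
  then have "card (Iset n) = card (Aset n) + 1" using finite_Aset by (simp add: Iset_def)
  ultimately show ?thesis using card_Aset[of n] by simp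
qed

theorem proposition4:
  fixes n :: nat
  assumes "n \<ge> 2"
  shows "sc (Syn {0..<n} (deltaV n)) = 2 ^ n - n"
  unfolding sc_def
proof (rule Least_equality)
  show "\<exists>Q d q0 F. dfa_recognizes (Syn {0..<n} (deltaV n)) Q d q0 F \<and> card Q = 2 ^ n - n"
    using upper[OF assms] by blast
next
  fix m assume "\<exists>Q d q0 F. dfa_recognizes (Syn {0..<n} (deltaV n)) Q d q0 F \<and> card Q = m"
  then show "2 ^ n - n \<le> m" using lower[OF assms] by blast
qed

end
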